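(* For all integers $n\ge1$ and $r\ge0$, and all $X>0$, $$P^{n}\big[X^{n}\check q_r(\alpha)\big](X)=\frac{(-1)^{n}}{\binom{r+n}{n}}\,(P-1)\Big(P-\tfrac12\Big)\cdots\Big(P-\tfrac1n\Big)\big[\check q_{r+n}(\alpha)\big](X).$$
   Context: For $X>0$, $\alpha=X-\lfloor X\rfloor$. $P[f](X)=\frac1X\int_0^X f(x)\,dx$, $1$ denotes the identity operator, and polynomials in $P$ act by composition. The polynomials $q_n$ are defined by $q_1(\alpha)=\alpha-\tfrac12$ and $q_{n+1}'=q_n$, $\int_0^1 q_{n+1}=0$; $\check q_j(\alpha):=j!\,q_{j+1}(\alpha)$, regarded as period-1 functions of $X$. *)

theory Defs
  imports "HOL-Analysis.Analysis"
begin

definition Pop :: "(real \<Rightarrow> real) \<Rightarrow> real \<Rightarrow> real" where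
  "Pop f X = integral {0..X} f / X"

text \<open>The polynomials q_n on [0,1): q_1(a) = a - 1/2, q_{n+1}' = q_n and
  int_0^1 q_{n+1} = 0, realised as q_{n+1}(a) = int_0^a q_n - int_0^1 int_0^b q_n db.
  (Index 0 is a dummy value, never used.)\<close>
fun qpoly :: "nat \<Rightarrow> real \<Rightarrow> real" where
  "qpoly 0 = (\<lambda>_. 1)"
| "qpoly (Suc 0) = (\<lambda>a. a - 1/2)"
| "qpoly (Suc (Suc n)) = (\<lambda>a. integral {0..a} (qpoly (Suc n))
        - integral {0..1} (\<lambda>b. integral {0..b} (qpoly (Suc n))))"

definition qcheck :: "nat \<Rightarrow> real \<Rightarrow> real" where
  "qcheck j a = fact j * qpoly (Suc j) a"

text \<open>Pfactors n = (P - 1)(P - 1/2)...(P - 1/n) acting by composition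
  (the factors commute; the factor P - 1/(k+1) is applied after the first k).\<close>
fun Pfactors :: "nat \<Rightarrow> (real \<Rightarrow> real) \<Rightarrow> real \<Rightarrow> real" where
  "Pfactors 0 f = f"
| "Pfactors (Suc k) f = (\<lambda>X. Pop (Pfactors k f) X - Pfactors k f X / real (Suc k))"

end

theory Submission
  imports Defs
begin


definition good :: "(real \<Rightarrow> real) \<Rightarrow> bool" where
  "good f \<longleftrightarrow> (\<forall>X>0. f integrable_on {0..X} \<and> (\<exists>B. \<forall>x\<in>{0..X}. \<bar>f x\<bar> \<le> B))"

theorem mainTheorem6:
  fixes n r :: nat and X :: real
  assumes "n \<ge> 1" and "X > 0"
  shows "(Pop ^^ n) (\<lambda>x. x ^ n * qcheck r (frac x)) X
    = (-1) ^ n / real ((r + n) choose n) * Pfactors n (\<lambda>x. qcheck (r + n) (frac x)) X"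
proof -
  have Pop_cong: "Pop f X = Pop g X" if assms: "\<And>x. x > 0 \<Longrightarrow> f x = g x" for f g :: "real \<Rightarrow> real" and X :: real
  proof -
    have "integral {0..X} f = integral {0..X} g"
      by (rule integral_spike[of "{0}"]) (use assms in auto)
    then show ?thesis by (simp add: Pop_def)
  qed

  have Pop_good: "good (Pop f)" if assms: "good f" for f :: "real \<Rightarrow> real"
    unfolding good_def
  proof (intro allI impI conjI)
    fix X :: real assume X: "X > 0"
    from assms X obtain B where B: "\<And>x. x\<in>{0..X} \<Longrightarrow> \<bar>f x\<bar> \<le> B" and fi: "f integrable_on {0..X}"
      unfolding good_def by blast
    have bnd: "\<bar>Pop f x\<bar> \<le> B" if "x \<in> {0..X}" for x
    proof (cases "x = 0")
      case True then show ?thesis using B[of 0] X by (simp add: Pop_def)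
    next
      case False
      with that have x: "0 < x" "x \<le> X" by auto
      have fi': "f integrable_on {0..x}"
        by (rule integrable_on_subinterval[OF fi]) (use x in auto)
      have "norm (integral {0..x} f) \<le> integral {0..x} (\<lambda>_. B)"
        by (rule integral_norm_bound_integral[OF fi']) (use B x in auto)
      also have "\<dots> = B * x" using x by simp
      finally have "\<bar>integral {0..x} f\<bar> \<le> B * x" by simp
      then show ?thesis using x by (simp add: Pop_def divide_simps abs_divide)
    qed
    then show "\<exists>B. \<forall>x\<in>{0..X}. \<bar>Pop f x\<bar> \<le> B" by blast
    have cont: "continuous_on {0<..<X} (Pop f)"
    proof -
      have "continuous_on {0..X} (\<lambda>x. integral {0..x} f)"
        by (rule indefinite_integral_continuous_1[OF fi])
      then have "continuous_on {0<..<X} (\<lambda>x. integral {0..x} f)"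
        by (rule continuous_on_subset) auto
      then have "continuous_on {0<..<X} (\<lambda>x. integral {0..x} f / x)"
        by (intro continuous_intros) auto
      then show ?thesis unfolding Pop_def[abs_def] .
    qed
    have "Pop f integrable_on {0<..<X}"
    proof (rule measurable_bounded_by_integrable_imp_integrable_real[where g="\<lambda>_. B"])
      show "Pop f \<in> borel_measurable (lebesgue_on {0<..<X})"
        by (rule continuous_imp_measurable_on_sets_lebesgue[OF cont]) auto
      show "(\<lambda>_. B) integrable_on {0<..<X}"
        using integrable_on_open_interval_real by blast
    qed (use bnd in auto)
    then show "Pop f integrable_on {0..X}"
      using integrable_on_open_interval_real by blast
  qed

  have good_Popn: "good f \<Longrightarrow> good ((Pop ^^ n) f)" for f :: "real \<Rightarrow> real" and n :: nat
    by (induction n) (auto intro: Pop_good)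

  have Popn_cong: "X > 0 \<Longrightarrow> (Pop ^^ n) f X = (Pop ^^ n) g X" if assms: "\<And>x. x > 0 \<Longrightarrow> f x = g x" for f g :: "real \<Rightarrow> real" and n :: nat and X :: real
  proof (induction n arbitrary: X)
    case 0 then show ?case using assms by simp
  next
    case (Suc n)
    show ?case unfolding funpow.simps o_apply by (rule Pop_cong, rule Suc.IH)
  qed

  have integral_mult_real: "integral S (\<lambda>x. (c::real) * f x) = c * integral S f" for S :: "real set" and c :: real and f :: "real \<Rightarrow> real"
    using integral_cmul[of S c f] by simp

  have Pop_nonpos: "X \<le> 0 \<Longrightarrow> Pop h X = 0" for h :: "real \<Rightarrow> real" and X :: real
  proof (cases "X = 0")
    case True then show ?thesis by (simp add: Pop_def)
  next
    case False
    assume "X \<le> 0"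
    with False have "{0..X} = {}" by auto
    then show ?thesis by (simp add: Pop_def)
  qed

  have Pop_lin: "Pop (\<lambda>x. a * f x + b * g x) X = a * Pop f X + b * Pop g X" if assms: "good f" "good g" for f g :: "real \<Rightarrow> real" and a b X :: real
  proof (cases "X > 0")
    case True
    then have fi: "f integrable_on {0..X}" and gi: "g integrable_on {0..X}" using assms unfolding good_def by auto
    have fi': "(\<lambda>x. a * f x) integrable_on {0..X}" using integrable_on_cmult_left[OF fi, of a] by simp
    have gi': "(\<lambda>x. b * g x) integrable_on {0..X}" using integrable_on_cmult_left[OF gi, of b] by simp
    have "integral {0..X} (\<lambda>x. a * f x + b * g x) = integral {0..X} (\<lambda>x. a * f x) + integral {0..X} (\<lambda>x. b * g x)"
      by (rule integral_add[OF fi' gi'])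
    also have "\<dots> = a * integral {0..X} f + b * integral {0..X} g"
      by (simp only: integral_mult_real)
    finally show ?thesis by (simp add: Pop_def add_divide_distrib)
  next
    case False
    then show ?thesis by (simp add: Pop_nonpos)
  qed

  have good_lin: "good f \<Longrightarrow> good g \<Longrightarrow> good (\<lambda>x. a * f x + b * g x)" for f g :: "real \<Rightarrow> real" and a b :: real
    unfolding good_def
  proof (intro allI impI conjI)
    fix X :: real assume f: "\<forall>X>0. f integrable_on {0..X} \<and> (\<exists>B. \<forall>x\<in>{0..X}. \<bar>f x\<bar> \<le> B)"
      and g: "\<forall>X>0. g integrable_on {0..X} \<and> (\<exists>B. \<forall>x\<in>{0..X}. \<bar>g x\<bar> \<le> B)" and X: "X > 0"
    then have "f integrable_on {0..X}" "g integrable_on {0..X}" by auto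
    then have "(\<lambda>x. a * f x) integrable_on {0..X}" "(\<lambda>x. b * g x) integrable_on {0..X}"
      using integrable_on_cmult_left[of f _ a] integrable_on_cmult_left[of g _ b] by auto
    then show "(\<lambda>x. a * f x + b * g x) integrable_on {0..X}"
      by (rule integrable_add)
    from f g X obtain B1 B2 where B: "\<forall>x\<in>{0..X}. \<bar>f x\<bar> \<le> B1" "\<forall>x\<in>{0..X}. \<bar>g x\<bar> \<le> B2" by blast
    have "\<forall>x\<in>{0..X}. \<bar>a * f x + b * g x\<bar> \<le> \<bar>a\<bar> * B1 + \<bar>b\<bar> * B2"
    proof
      fix x assume "x \<in> {0..X}"
      with B have "\<bar>f x\<bar> \<le> B1" "\<bar>g x\<bar> \<le> B2" by auto
      then have "\<bar>a\<bar> * \<bar>f x\<bar> \<le> \<bar>a\<bar> * B1" "\<bar>b\<bar> * \<bar>g x\<bar> \<le> \<bar>b\<bar> * B2"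
        by (simp_all add: mult_left_mono)
      moreover have "\<bar>a * f x + b * g x\<bar> \<le> \<bar>a\<bar> * \<bar>f x\<bar> + \<bar>b\<bar> * \<bar>g x\<bar>"
        using abs_triangle_ineq[of "a*f x" "b*g x"] by (simp add: abs_mult)
      ultimately show "\<bar>a * f x + b * g x\<bar> \<le> \<bar>a\<bar> * B1 + \<bar>b\<bar> * B2" by linarith
    qed
    then show "\<exists>B. \<forall>x\<in>{0..X}. \<bar>a * f x + b * g x\<bar> \<le> B" by blast
  qed

  have Popn_lin: "(Pop ^^ n) (\<lambda>x. a * f x + b * g x) X = a * (Pop ^^ n) f X + b * (Pop ^^ n) g X" if assms: "good f" "good g" for f g :: "real \<Rightarrow> real" and a b X :: real and n :: nat
  proof (induction n arbitrary: X)
    case 0 then show ?case by simp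
  next
    case (Suc n)
    have "(Pop ^^ Suc n) (\<lambda>x. a * f x + b * g x) X = Pop (\<lambda>x. a * (Pop ^^ n) f x + b * (Pop ^^ n) g x) X"
    proof -
      have e: "(Pop ^^ n) (\<lambda>x. a * f x + b * g x) = (\<lambda>x. a * (Pop ^^ n) f x + b * (Pop ^^ n) g x)"
        by (rule ext) (rule Suc.IH)
      show ?thesis by (simp only: funpow.simps o_apply e)
    qed
    also have "\<dots> = a * (Pop ^^ Suc n) f X + b * (Pop ^^ Suc n) g X"
      by (simp add: Pop_lin good_Popn assms)
    finally show ?case .
  qed

  have good_cont: "continuous_on {0..} f \<Longrightarrow> good f" for f :: "real \<Rightarrow> real"
    unfolding good_def
  proof (intro allI impI conjI)
    fix X :: real assume c: "continuous_on {0..} f" and "X > 0"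
    have c': "continuous_on {0..X} f" using c by (rule continuous_on_subset) auto
    then show "f integrable_on {0..X}" by (rule integrable_continuous_interval)
    have "compact (f ` {0..X})" by (rule compact_continuous_image[OF c']) auto
    then have "bounded (f ` {0..X})" by (rule compact_imp_bounded)
    then obtain B where "\<forall>y\<in>f ` {0..X}. norm y \<le> B" unfolding bounded_iff by blast
    then show "\<exists>B. \<forall>x\<in>{0..X}. \<bar>f x\<bar> \<le> B" by auto
  qed

  have q_cont: "continuous_on {0..1} (qpoly (Suc m))" for m :: nat
  proof (induction m)
    case 0 then show ?case by (simp add: continuous_intros)
  next
    case (Suc m)
    have "continuous_on {0..1} (\<lambda>a. integral {0..a} (qpoly (Suc m)))"
      by (rule indefinite_integral_continuous_1[OF integrable_continuous_interval[OF Suc.IH]])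
    then show ?case by (simp add: continuous_intros)
  qed

  have q_deriv: "(qpoly (Suc (Suc m)) has_real_derivative qpoly (Suc m) x) (at x within {0..1})" if assms: "x \<in> {0..1}" for m :: nat and x :: real
  proof -
    have "((\<lambda>a. integral {0..a} (qpoly (Suc m))) has_real_derivative qpoly (Suc m) x) (at x within {0..1})"
      by (rule integral_has_real_derivative[OF q_cont assms])
    then have "((\<lambda>a. integral {0..a} (qpoly (Suc m)) - integral {0..1} (\<lambda>b. integral {0..b} (qpoly (Suc m))))
       has_real_derivative qpoly (Suc m) x - 0) (at x within {0..1})"
      by (intro DERIV_diff DERIV_const)
    then show ?thesis by simp
  qed

  have q_int0: "integral {0..1} (qpoly (Suc m)) = 0" for m :: nat
  proof (cases m)
    case 0
    have "((\<lambda>a. a - 1/2) has_integral ((\<lambda>a::real. a^2/2 - a/2) 1 - (\<lambda>a. a^2/2 - a/2) 0)) {0..1}"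
    proof (rule fundamental_theorem_of_calculus[of 0 1 "\<lambda>a::real. a^2/2 - a/2" "\<lambda>a. a - 1/2"])
      fix x :: real assume "x \<in> {0..1}"
      show "((\<lambda>a. a^2/2 - a/2) has_vector_derivative x - 1/2) (at x within {0..1})"
      proof -
        have "((\<lambda>a. a^2/2 - a/2) has_real_derivative (2 * x / 2 - 1/2)) (at x within {0..1})"
          by (auto intro!: derivative_eq_intros)
        then show "((\<lambda>a. a^2/2 - a/2) has_vector_derivative x - 1/2) (at x within {0..1})"
          by (simp add: has_real_derivative_iff_has_vector_derivative)
      qed
    qed simp
    then show ?thesis using 0 by (simp add: integral_unique)
  next
    case (Suc k)
    define C where "C = integral {0..1} (\<lambda>b. integral {0..b} (qpoly (Suc k)))"
    have i1: "(\<lambda>a. integral {0..a} (qpoly (Suc k))) integrable_on {0..1}"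
      by (rule integrable_continuous_interval[OF indefinite_integral_continuous_1[OF integrable_continuous_interval[OF q_cont]]])
    have "integral {0..1} (qpoly (Suc m)) = integral {0..1} (\<lambda>a. integral {0..a} (qpoly (Suc k)) - C)"
      using Suc by (simp add: C_def)
    also have "\<dots> = integral {0..1} (\<lambda>a. integral {0..a} (qpoly (Suc k))) - integral {0..1} (\<lambda>_::real. C)"
    proof -
      have i2: "(\<lambda>_::real. C) integrable_on {0..1}" by (intro integrable_continuous_interval continuous_on_const)
      show ?thesis using integral_diff[OF i1 i2] .
    qed
    also have "\<dots> = 0" by (simp only: C_def[symmetric]) simp
    finally show ?thesis .
  qed

  have q_period: "qpoly (Suc (Suc m)) 1 = qpoly (Suc (Suc m)) 0" for m :: nat
    using q_int0[of m] by simp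

  have qc_cont: "continuous_on {0..1} (qcheck r)" for r :: nat
    unfolding qcheck_def[abs_def] by (intro continuous_intros q_cont)

  have qc_deriv: "(qcheck (Suc r) has_real_derivative real (Suc r) * qcheck r x) (at x within {0..1})" if assms: "x \<in> {0..1}" for r :: nat and x :: real
  proof -
    have "((\<lambda>a. fact (Suc r) * qpoly (Suc (Suc r)) a) has_real_derivative fact (Suc r) * qpoly (Suc r) x) (at x within {0..1})"
      by (intro DERIV_cmult q_deriv assms)
    then have "((\<lambda>a. fact (Suc r) * qpoly (Suc (Suc r)) a) has_real_derivative real (Suc r) * qcheck r x) (at x within {0..1})"
      by (rule DERIV_cong) (simp add: qcheck_def)
    then show ?thesis unfolding qcheck_def[of "Suc r", abs_def] .
  qed

  have qc_period: "qcheck (Suc r) 1 = qcheck (Suc r) 0" for r :: nat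
    using q_period[of r] by (simp add: qcheck_def)

  have frac_piece: "g (frac x) = g (x - of_int k)" if assms: "x \<in> {of_int k..of_int k + 1}" "g 0 = g 1" for k :: int and g :: "real \<Rightarrow> real" and x :: real
  proof (cases "x < of_int k + 1")
    case True
    then have "floor x = k" using assms by (simp add: floor_unique)
    then show ?thesis by (simp add: frac_def)
  next
    case False
    then have "x = of_int k + 1" using assms by auto
    then have "frac x = 0" by (simp add: frac_def)
    then show ?thesis using assms \<open>x = of_int k + 1\<close> by simp
  qed

  have frac_comp_cont: "continuous_on UNIV (\<lambda>x. g (frac x))" if cg: "continuous_on {0..1} g" and per: "g 0 = g 1" for g :: "real \<Rightarrow> real"
  proof -
    have piece: "continuous_on {of_int k..of_int k + 1} (\<lambda>x. g (frac x))" for k :: int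
    proof -
      have c1: "continuous_on {of_int k..of_int k + 1} (\<lambda>x::real. x - of_int k)"
        by (intro continuous_intros)
      have c2: "(\<lambda>x::real. x - of_int k) ` {of_int k..of_int k + 1} \<subseteq> {0..1}" by auto
      have "continuous_on {of_int k..of_int k + 1} (\<lambda>x. g (x - of_int k))"
        by (rule continuous_on_compose2[OF cg c1 c2])
      then show ?thesis
        by (rule continuous_on_eq) (use frac_piece[OF _ per] in auto)
    qed
    show ?thesis
    proof (rule continuous_at_imp_continuous_on, intro ballI)
      fix x :: real
      define k where "k = floor x"
      have kx: "of_int k \<le> x" "x < of_int k + 1" unfolding k_def by linarith+
      have "continuous_on ({of_int (k - 1)..of_int (k-1) + 1} \<union> {of_int k..of_int k + 1}) (\<lambda>x. g (frac x))"
        by (intro continuous_on_closed_Un piece) auto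
      moreover have "{of_int (k - 1)..of_int (k-1) + 1} \<union> {of_int k..of_int k + 1} = {of_int k - 1..of_int k + (1::real)}"
        by auto
      ultimately have "continuous_on {of_int k - 1..of_int k + (1::real)} (\<lambda>x. g (frac x))" by simp
      moreover have "x \<in> interior {of_int k - 1..of_int k + (1::real)}" using kx by simp
      ultimately show "isCont (\<lambda>x. g (frac x)) x" by (rule continuous_on_interior)
    qed
  qed

  have frac_comp_deriv: "((\<lambda>y. g (frac y)) has_real_derivative D) (at x)" if d: "(g has_real_derivative D) (at (frac x) within {0..1})" and x: "x \<notin> \<int>" for g :: "real \<Rightarrow> real" and D x :: real
  proof -
    define k where "k = floor x"
    have kx: "of_int k \<le> x" "x < of_int k + 1" unfolding k_def by linarith+
    have "x \<noteq> of_int k" using x by auto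
    with kx have kx': "of_int k < x" by simp
    have fx: "frac x = x - of_int k" by (simp add: frac_def k_def)
    have "0 < frac x" "frac x < 1" using kx kx' fx by auto
    then have d': "(g has_real_derivative D) (at (x - of_int k))"
      using d fx at_within_Icc_at[of 0 "frac x" 1] by simp
    have "((\<lambda>y. g (y - of_int k)) has_real_derivative D * 1) (at x)"
    proof -
      have "((\<lambda>y. y - of_int k) has_real_derivative 1) (at x)" by (auto intro!: derivative_eq_intros)
      from DERIV_chain2[where g="\<lambda>y. y - of_int k", OF d' this] show ?thesis .
    qed
    then have "((\<lambda>y. g (y - of_int k)) has_real_derivative D) (at x)" by simp
    then show ?thesis
    proof (rule has_field_derivative_transform_within_open[where S="{of_int k<..<of_int k + 1}"])
      show "x \<in> {real_of_int k<..<real_of_int k + 1}" using kx kx' by auto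
      fix y assume "y \<in> {real_of_int k<..<real_of_int k + 1}"
      then have "floor y = k" by (simp add: floor_unique)
      then show "g (y - of_int k) = g (frac y)" by (simp add: frac_def)
    qed auto
  qed

  have h_cont: "continuous_on UNIV (\<lambda>x. qcheck (Suc r) (frac x))" for r :: nat
    by (rule frac_comp_cont[OF qc_cont qc_period[symmetric]])

  have h_deriv: "x \<notin> \<int> \<Longrightarrow> ((\<lambda>x. qcheck (Suc r) (frac x)) has_real_derivative real (Suc r) * qcheck r (frac x)) (at x)" for r :: nat and x :: real
    by (rule frac_comp_deriv[OF qc_deriv]) (auto simp: frac_ge_0 less_imp_le[OF frac_lt_1])

  have good_f1: "good (\<lambda>x. x ^ n * qcheck (Suc r) (frac x))" for n r :: nat
  proof (rule good_cont)
    show "continuous_on {0..} (\<lambda>x. x ^ n * qcheck (Suc r) (frac x))"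
      by (intro continuous_intros continuous_on_subset[OF h_cont]) auto
  qed

  have alg2: "(X * Xn * h - n1 * I) / r1 / X = 1 / r1 * (Xn * h) + (- n1 / r1) * (I / X)" if assms: "X > 0" "r1 > 0" for X r1 n1 Xn h I :: real
    using assms by (simp add: field_simps)

  have key: "Pop (\<lambda>x. x ^ Suc n * qcheck r (frac x)) X
      = (1 / real (Suc r)) * (X ^ n * qcheck (Suc r) (frac X))
        + (- real (Suc n) / real (Suc r)) * Pop (\<lambda>x. x ^ n * qcheck (Suc r) (frac x)) X" if X: "X > 0" for X :: real and n r :: nat
  proof -
    define H where "H = (\<lambda>x. qcheck (Suc r) (frac x))"
    define hr where "hr = (\<lambda>x. qcheck r (frac x))"
    define f where "f = (\<lambda>x::real. x ^ Suc n * H x)"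
    define f' where "f' = (\<lambda>x::real. real (Suc n) * x ^ n * H x + real (Suc r) * hr x * x ^ Suc n)"
    define S where "S = {x \<in> {0..X}. x \<in> \<int>}"
    have finS: "finite S"
    proof (rule finite_subset)
      show "S \<subseteq> of_int ` {0..ceiling X}"
      proof
        fix x assume "x \<in> S"
        then obtain m where m: "x = of_int m" "0 \<le> x" "x \<le> X" unfolding S_def by (auto elim: Ints_cases)
        then have "0 \<le> m" "m \<le> ceiling X" by (auto simp: le_ceiling_iff)
        with m show "x \<in> of_int ` {0..ceiling X}" by auto
      qed
    qed auto
    have Hc: "continuous_on UNIV H" unfolding H_def by (rule h_cont)
    have fc: "continuous_on {0..X} f"
      unfolding f_def by (intro continuous_intros continuous_on_subset[OF Hc]) auto
    have fd: "(f has_vector_derivative f' x) (at x)" if "x \<in> {0<..<X} - S" for x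
    proof -
      have "x \<notin> \<int>" using that unfolding S_def by auto
      then have dH: "(H has_real_derivative real (Suc r) * hr x) (at x)"
        unfolding H_def hr_def by (rule h_deriv)
      have dp: "((\<lambda>x. x ^ Suc n) has_real_derivative real (Suc n) * x ^ n) (at x)"
        using DERIV_pow[of "Suc n" x UNIV] by simp
      have "(f has_real_derivative real (Suc n) * x ^ n * H x + real (Suc r) * hr x * x ^ Suc n) (at x)"
        unfolding f_def using DERIV_mult[OF dp dH] by simp
      then show ?thesis unfolding f'_def by (simp add: has_real_derivative_iff_has_vector_derivative)
    qed
    have "(f' has_integral (f X - f 0)) {0..X}"
      by (rule fundamental_theorem_of_calculus_interior_strong[OF finS]) (use X fd fc in auto)
    then have I1: "(f' has_integral (X ^ Suc n * H X)) {0..X}" by (simp add: f_def)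
    define g1 where "g1 = (\<lambda>x::real. real (Suc n) * (x ^ n * H x))"
    have g1i: "g1 integrable_on {0..X}"
      unfolding g1_def by (intro integrable_continuous_interval continuous_intros continuous_on_subset[OF Hc]) auto
    have "integral {0..X} (\<lambda>x. f' x - g1 x) = X ^ Suc n * H X - integral {0..X} g1"
      using integral_diff[OF has_integral_integrable[OF I1] g1i] integral_unique[OF I1] by simp
    moreover have "(\<lambda>x. f' x - g1 x) = (\<lambda>x. real (Suc r) * (x ^ Suc n * hr x))"
      unfolding f'_def g1_def by (auto simp: algebra_simps)
    ultimately have "real (Suc r) * integral {0..X} (\<lambda>x. x ^ Suc n * hr x) = X ^ Suc n * H X - real (Suc n) * integral {0..X} (\<lambda>x. x ^ n * H x)"
      by (simp add: integral_mult_real g1_def)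
    then have eq: "integral {0..X} (\<lambda>x. x ^ Suc n * hr x) = (X ^ Suc n * H X - real (Suc n) * integral {0..X} (\<lambda>x. x ^ n * H x)) / real (Suc r)"
      by (simp add: field_simps)
    have P1: "Pop (\<lambda>x. x ^ Suc n * qcheck r (frac x)) X = integral {0..X} (\<lambda>x. x ^ Suc n * hr x) / X"
      by (simp only: Pop_def hr_def)
    have P0: "Pop (\<lambda>x. x ^ n * qcheck (Suc r) (frac x)) X = integral {0..X} (\<lambda>x. x ^ n * H x) / X"
      by (simp only: Pop_def H_def)
    have HX: "qcheck (Suc r) (frac X) = H X" by (simp add: H_def)
    show ?thesis
      unfolding P1 P0 HX eq unfolding power_Suc
      by (rule alg2) (use X in auto)
  qed

  have alg: "1 / r1 * (s / b1 * G) + (- n1 / r1) * (s / b1 * P) = (- 1 * s) / (r1 * b1 / n1) * (P - G / n1)" if assms: "b1 > 0" "r1 > 0" "n1 > 0" for b1 r1 n1 s G P :: real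
    using assms by (simp add: field_simps)

  have main_gen: "\<forall>r X. X > 0 \<longrightarrow> (Pop ^^ n) (\<lambda>x. x ^ n * qcheck r (frac x)) X
      = (-1) ^ n / real ((r + n) choose n) * Pfactors n (\<lambda>x. qcheck (r + n) (frac x)) X" for n :: nat
  proof (induction n)
    case 0 then show ?case by simp
  next
    case (Suc n)
    show ?case
    proof (intro allI impI)
      fix r :: nat and X :: real assume X: "X > 0"
      define f1 where "f1 = (\<lambda>x::real. x ^ n * qcheck (Suc r) (frac x))"
      define G where "G = Pfactors n (\<lambda>x. qcheck (Suc r + n) (frac x))"
      define b1 where "b1 = real (Suc r + n choose n)"
      define b2 where "b2 = real (r + Suc n choose Suc n)"
      define K where "K = (-1) ^ n / b1"
      define c where "c = 1 / real (Suc r)"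
      define d where "d = - real (Suc n) / real (Suc r)"
      have IH: "\<And>y. y > 0 \<Longrightarrow> (Pop ^^ n) f1 y = K * G y"
        using Suc.IH unfolding f1_def G_def K_def b1_def by blast
      have gf1: "good f1" unfolding f1_def by (rule good_f1)
      have "(Pop ^^ Suc n) (\<lambda>x. x ^ Suc n * qcheck r (frac x)) X
          = (Pop ^^ n) (Pop (\<lambda>x. x ^ Suc n * qcheck r (frac x))) X"
        by (simp only: funpow_Suc_right o_def)
      also have "\<dots> = (Pop ^^ n) (\<lambda>y. c * f1 y + d * Pop f1 y) X"
        by (rule Popn_cong[OF _ X], unfold c_def d_def f1_def, rule key, assumption)
      also have "\<dots> = c * (Pop ^^ n) f1 X + d * (Pop ^^ n) (Pop f1) X"
        by (rule Popn_lin[OF gf1 Pop_good[OF gf1]])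
      also have "(Pop ^^ n) (Pop f1) X = Pop ((Pop ^^ n) f1) X"
        by (simp add: funpow_swap1)
      also have "\<dots> = Pop (\<lambda>y. K * G y) X"
        by (rule Pop_cong) (simp add: IH)
      also have "\<dots> = K * Pop G X"
        by (simp add: Pop_def integral_mult_real)
      also have "(Pop ^^ n) f1 X = K * G X" by (rule IH[OF X])
      finally have L: "(Pop ^^ Suc n) (\<lambda>x. x ^ Suc n * qcheck r (frac x)) X = c * (K * G X) + d * (K * Pop G X)" .
      have "real (Suc n) * b2 = real (Suc r) * b1"
      proof -
        have e1: "r + Suc n = Suc (n + r)" "Suc r + n = Suc (n + r)" by simp_all
        have "real (Suc n * (Suc (n + r) choose Suc n)) = real (Suc r * (Suc (n + r) choose n))"
          using Suc_times_binomial_add[of n r] by (simp only:)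
        then show ?thesis by (simp only: b1_def b2_def e1 of_nat_mult)
      qed
      moreover have "b1 > 0" unfolding b1_def by simp
      ultimately have b2e: "b2 = real (Suc r) * b1 / real (Suc n)"
        by (simp add: field_simps)
      have R: "(-1) ^ Suc n / real ((r + Suc n) choose Suc n) * Pfactors (Suc n) (\<lambda>x. qcheck (r + Suc n) (frac x)) X
          = (-1) ^ Suc n / b2 * (Pop G X - G X / real (Suc n))"
        by (simp add: b2_def G_def)
      have A: "c * (K * G X) + d * (K * Pop G X) = (-1) ^ Suc n / b2 * (Pop G X - G X / real (Suc n))"
        unfolding b2e c_def d_def K_def power_Suc
        by (rule alg[OF \<open>b1 > 0\<close>]) simp_all
      show "(Pop ^^ Suc n) (\<lambda>x. x ^ Suc n * qcheck r (frac x)) X =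
          (-1) ^ Suc n / real ((r + Suc n) choose Suc n) * Pfactors (Suc n) (\<lambda>x. qcheck (r + Suc n) (frac x)) X"
        unfolding L R by (rule A)
    qed
  qed

  from main_gen[of n] show ?thesis using assms(2) by blast
qed

end
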